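(* Let $q\in(0,1]$. Assume: [A6] for every $j\in\mathcal J^{(0)}$, $(\xi_T^j)^{-1/q}|\alpha_T^j|^{-1}\to0$ in probability as $T\to\infty$; [A7$'$] for some $R>0$: (i) for every $T\in\mathbb T$, $\mathbb H_T$ is almost surely thrice differentiable in $\theta$ on $B=\{\theta\in\Theta:|\theta-\theta^*|<R\}$; (ii) $\|a_T\|\,\partial_\theta\mathbb H_T(\theta^* )=O_p(1)$; (iii) $\|a_T\|^2\sup_{\theta\in B}|\partial_\theta^2\mathbb H_T(\theta)|=O_p(1)$; (iv) $\|a_T\|^2\sup_{\theta\in B}|\partial_\theta^3\mathbb H_T(\theta)|=O_p(1)$, as $T\to\infty$. Then [A7] holds: for every $M>0$, $$\sup_{\substack{u,v\in\mathbb U_T,\ |u|,|v|<M,\ u\neq v}}\frac{|\mathbb H_T(\theta^*+a_Tu)-\mathbb H_T(\theta^*+a_Tv)|}{|u-v|^q}\,\|G_T^{(00)}\|^q\to0$$ in probability as $T\to\infty$.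
   Context: Let $\Theta\subset\mathbb R^{\mathsf p}$ be a bounded open set with closure $\overline\Theta$ and $\theta^*\in\Theta$. Let $(\Omega,\mathcal F,P)$ be a probability space, $\mathbb T\subset\mathbb R_{\ge0}$ with $\sup\mathbb T=\infty$; limits $T\to\infty$ are along $\mathbb T$. For each $T\in\mathbb T$, $\mathbb H_T:\Omega\times\overline\Theta\to\mathbb R$ is a random field continuous in $\theta$ for every $\omega$. $\xi_T^j>0$ ($j=1,\dots,\mathsf p$) are (possibly random) positive quantities (the penalty weights). $\mathcal J^{(0)}=\{j:\theta^*_j=0\}$, $\mathcal J^{(1)}=\{j:\theta^*_j\ne0\}$; for a matrix $A$, $A^{(00)}=(A_{ij})_{i,j\in\mathcal J^{(0)}}$. $a_T=\mathrm{diag}(\alpha_T^1,\dots,\alpha_T^{\mathsf p})$ is a deterministic invertible diagonal matrix with $\|a_T\|\to0$, $\|A\|$ denoting the spectral norm. $\mathbb U_T=\{u:\theta^*+a_Tu\in\overline\Theta\}$. $\tilde a_T$ is the diagonal matrix with $(\tilde a_T)_{jj}=(\xi_T^j)^{-1/q}$ for $j\in\mathcal J^{(0)}$ and $(\tilde a_T)_{jj}=\alpha_T^j$ for $j\in\mathcal J^{(1)}$, and $G_T=a_T^{-1}\tilde a_T$. $\partial_\theta^k\mathbb H_T$ denotes the $k$-th derivative tensor in $\theta$. *)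

theory Defs
  imports "HOL-Analysis.Analysis" "HOL-Probability.Probability"
begin

definition along :: "real set \<Rightarrow> real filter" where
  "along TT = inf at_top (principal TT)"

text \<open>Outer probability (the random quantities need not be measurable).\<close>
definition outer_prob :: "'a measure \<Rightarrow> 'a set \<Rightarrow> real" where
  "outer_prob M A = Inf {measure M B | B. B \<in> sets M \<and> A \<subseteq> B}"

text \<open>X_T \<rightarrow> 0 in (outer) probability, for nonnegative (extended real) X.\<close>
definition tendsto0_prob :: "'a measure \<Rightarrow> real filter \<Rightarrow> (real \<Rightarrow> 'a \<Rightarrow> ereal) \<Rightarrow> bool" where
  "tendsto0_prob M F X \<longleftrightarrow>
     (\<forall>\<epsilon>>0. ((\<lambda>T. outer_prob M {\<omega> \<in> space M. ereal \<epsilon> < X T \<omega>}) \<longlongrightarrow> 0) F)"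

text \<open>X_T = O_p(1), for nonnegative (extended real) X.\<close>
definition bounded_prob :: "'a measure \<Rightarrow> real filter \<Rightarrow> (real \<Rightarrow> 'a \<Rightarrow> ereal) \<Rightarrow> bool" where
  "bounded_prob M F X \<longleftrightarrow>
     (\<forall>\<epsilon>>0. \<exists>C::real. eventually (\<lambda>T. outer_prob M {\<omega> \<in> space M. ereal C < X T \<omega>} < \<epsilon>) F)"

definition spec_norm :: "real^'n^'n \<Rightarrow> real" where
  "spec_norm A = onorm (\<lambda>x. A *v x)"

definition diag_mat :: "('n::finite \<Rightarrow> real) \<Rightarrow> real^'n^'n" where
  "diag_mat d = (\<chi> i j. if i = j then d i else 0)"

text \<open>Submatrix A^(00) indexed by J0, realised as the zero-padded matrix (same spectral norm).\<close>
definition sub00 :: "'n set \<Rightarrow> real^'n^'n \<Rightarrow> real^'n^'n" where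
  "sub00 J A = (\<chi> i j. if i \<in> J \<and> j \<in> J then A $ i $ j else 0)"

definition J0 :: "real^'n \<Rightarrow> 'n set" where
  "J0 \<theta>s = {j. \<theta>s $ j = 0}"

definition atil :: "real \<Rightarrow> real^'n \<Rightarrow> ('n::finite \<Rightarrow> real) \<Rightarrow> ('n \<Rightarrow> real) \<Rightarrow> real^'n^'n" where
  "atil q \<theta>s alpha xi = diag_mat (\<lambda>j. if \<theta>s $ j = 0 then xi j powr (-1/q) else alpha j)"

definition Gmat :: "real \<Rightarrow> real^'n \<Rightarrow> ('n::finite \<Rightarrow> real) \<Rightarrow> ('n \<Rightarrow> real) \<Rightarrow> real^'n^'n" where
  "Gmat q \<theta>s alpha xi = matrix_inv (diag_mat alpha) ** atil q \<theta>s alpha xi"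

definition tensor3_app :: "real^'n^'n^'n \<Rightarrow> real^'n \<Rightarrow> real^'n^'n" where
  "tensor3_app D h = (\<chi> i j. \<Sum>k\<in>UNIV. D $ i $ j $ k * h $ k)"

end

theory Submission
  imports Defs
begin


lemma onorm_mat_le:
  fixes A :: "real^'n::finite^'n"
  shows "onorm (\<lambda>h. A *v h) \<le> real CARD('n) * real CARD('n) * norm A"
proof -
  have "onorm (\<lambda>h. A *v h) \<le> real CARD('n) * real CARD('n) * norm A"
    apply (rule onorm_le_matrix_component[unfolded fun_eq_iff[symmetric]])
    by (rule order_trans[OF component_le_norm_cart Finite_Cartesian_Product.norm_nth_le])
  then show ?thesis by simp
qed

lemma spec_norm_bound:
  fixes A :: "real^'n::finite^'n"
  shows "norm (A *v x) \<le> spec_norm A * norm x" "0 \<le> spec_norm A"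
  unfolding spec_norm_def
  by (auto intro!: onorm onorm_pos_le)

lemma key_diff:
  fixes f :: "real^'n::finite \<Rightarrow> real" and d1 :: "real^'n \<Rightarrow> real^'n"
    and d2 :: "real^'n \<Rightarrow> real^'n^'n" and A :: "real^'n^'n"
  assumes der: "\<forall>\<theta>\<in>ball \<theta>s \<rho>. (f has_derivative (\<lambda>h. d1 \<theta> \<bullet> h)) (at \<theta>) \<and>
                 (d1 has_derivative (\<lambda>h. d2 \<theta> *v h)) (at \<theta>)"
    and sr: "spec_norm A * Mb < \<rho>"
    and C1: "spec_norm A * norm (d1 \<theta>s) \<le> C1"
    and C2: "\<forall>\<theta>\<in>ball \<theta>s \<rho>. (spec_norm A)\<^sup>2 * norm (d2 \<theta>) \<le> C2"
    and C1p: "0 \<le> C1" and C2p: "0 \<le> C2"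
    and u: "norm u < Mb" and v: "norm v < Mb"
  shows "\<bar>f (\<theta>s + A *v u) - f (\<theta>s + A *v v)\<bar>
           \<le> (C1 + real CARD('n) * real CARD('n) * C2 * Mb) * norm (u - v)"
proof -
  define s where "s = spec_norm A"
  define c0 where "c0 = real CARD('n) * real CARD('n)"
  have c0p: "0 \<le> c0" unfolding c0_def by simp
  have nA: "\<And>x. norm (A *v x) \<le> s * norm x" and s0: "0 \<le> s"
    using spec_norm_bound unfolding s_def by auto
  have Mbp: "0 \<le> Mb" using u norm_ge_zero[of u] by linarith
  have Rp: "0 \<le> (C1 + c0 * C2 * Mb) * norm (u - v)"
  proof -
    have "0 \<le> Mb" using u norm_ge_zero[of u] by linarith
    then show ?thesis using C1p C2p c0p by (intro mult_nonneg_nonneg add_nonneg_nonneg) auto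
  qed
  show ?thesis
  proof (cases "s = 0")
    case True
    have "A *v u = 0" "A *v v = 0" using nA[of u] nA[of v] True by auto
    then show ?thesis using Rp unfolding c0_def by simp
  next
    case False
    then have sp: "0 < s" using s0 by simp
    define S where "S = ball \<theta>s (s * Mb)"
    have SB: "S \<subseteq> ball \<theta>s \<rho>" unfolding S_def using sr s_def by auto
    have b2: "onorm (\<lambda>h. d2 \<theta> *v h) \<le> c0 * C2 / s\<^sup>2" if "\<theta> \<in> S" for \<theta>
    proof -
      have "s\<^sup>2 * norm (d2 \<theta>) \<le> C2" using C2 SB that s_def by auto
      then have "norm (d2 \<theta>) \<le> C2 / s\<^sup>2" using sp by (simp add: field_simps)
      then have "c0 * norm (d2 \<theta>) \<le> c0 * (C2 / s\<^sup>2)" using c0p by (rule mult_left_mono)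
      then show ?thesis using onorm_mat_le[of "d2 \<theta>"] unfolding c0_def by simp
    qed
    have bd1: "norm (d1 \<theta> - d1 \<theta>s) \<le> c0 * C2 / s\<^sup>2 * norm (\<theta> - \<theta>s)" if "\<theta> \<in> S" for \<theta>
    proof (rule differentiable_bound[where S=S and f'="\<lambda>\<theta> h. d2 \<theta> *v h"])
      show "convex S" unfolding S_def by simp
      show "(d1 has_derivative (\<lambda>h. d2 x *v h)) (at x within S)" if "x \<in> S" for x
      proof -
        have "x \<in> ball \<theta>s \<rho>" using SB that by blast
        then have "(d1 has_derivative (\<lambda>h. d2 x *v h)) (at x)" using der by blast
        then show ?thesis by (rule has_derivative_at_withinI)
      qed
      show "onorm (\<lambda>h. d2 x *v h) \<le> c0 * C2 / s\<^sup>2" if "x \<in> S" for x using b2 that .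
      show "\<theta> \<in> S" by fact
      show "\<theta>s \<in> S" unfolding S_def using sp u by (smt (verit) centre_in_ball mult_pos_pos norm_ge_zero)
    qed
    define L where "L = norm (d1 \<theta>s) + c0 * C2 * Mb / s"
    have b1: "onorm (\<lambda>h. d1 \<theta> \<bullet> h) \<le> L" if "\<theta> \<in> S" for \<theta>
    proof -
      have "norm (\<theta> - \<theta>s) \<le> s * Mb" using that unfolding S_def by (simp add: dist_norm norm_minus_commute)
      then have "c0 * C2 / s\<^sup>2 * norm (\<theta> - \<theta>s) \<le> c0 * C2 / s\<^sup>2 * (s * Mb)"
        using c0p C2p by (intro mult_left_mono) auto
      also have "\<dots> = c0 * C2 * Mb / s" using sp by (simp add: power2_eq_square field_simps)
      finally have "norm (d1 \<theta>) \<le> L" using bd1[OF that] unfolding L_def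
        by (smt (verit) norm_triangle_ineq2)
      then show ?thesis
        by (intro onorm_le) (smt (verit) Cauchy_Schwarz_ineq2 mult_right_mono norm_ge_zero real_norm_def)
    qed
    have xin: "\<theta>s + A *v w \<in> S" if "norm w < Mb" for w
    proof -
      have "norm (A *v w) \<le> s * norm w" by (rule nA)
      also have "\<dots> < s * Mb" using sp that by simp
      finally show ?thesis unfolding S_def by (simp add: dist_norm)
    qed
    have "norm (f (\<theta>s + A *v u) - f (\<theta>s + A *v v)) \<le> L * norm ((\<theta>s + A *v u) - (\<theta>s + A *v v))"
    proof (rule differentiable_bound[where S=S and f'="\<lambda>\<theta> h. d1 \<theta> \<bullet> h"])
      show "convex S" unfolding S_def by simp
      show "(f has_derivative (\<lambda>h. d1 x \<bullet> h)) (at x within S)" if "x \<in> S" for x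
      proof -
        have "x \<in> ball \<theta>s \<rho>" using SB that by blast
        then have "(f has_derivative (\<lambda>h. d1 x \<bullet> h)) (at x)" using der by blast
        then show ?thesis by (rule has_derivative_at_withinI)
      qed
    qed (use b1 xin u v in auto)
    also have "(\<theta>s + A *v u) - (\<theta>s + A *v v) = A *v (u - v)"
      by (simp add: matrix_vector_mult_diff_distrib)
    also have "L * norm (A *v (u - v)) \<le> L * (s * norm (u - v))"
      using nA L_def c0p C2p sp Mbp by (intro mult_left_mono) auto
    also have "\<dots> = (s * norm (d1 \<theta>s) + c0 * C2 * Mb) * norm (u - v)"
      unfolding L_def using sp by (simp add: field_simps)
    also have "\<dots> \<le> (C1 + c0 * C2 * Mb) * norm (u - v)"
      using C1 s_def by (intro mult_right_mono) auto
    finally show ?thesis unfolding c0_def by simp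
  qed
qed

lemma diag_mul: "diag_mat a ** diag_mat b = diag_mat (\<lambda>j. a j * (b j :: real))"
  unfolding diag_mat_def matrix_matrix_mult_def
  by (simp add: vec_eq_iff if_distrib[where f="\<lambda>x. x * _"] cong: if_cong)

lemma diag_one: "diag_mat (\<lambda>_. 1::real) = mat 1"
  unfolding diag_mat_def mat_def by simp

lemma diag_inv:
  assumes "\<forall>j. a j \<noteq> (0::real)"
  shows "matrix_inv (diag_mat a) = diag_mat (\<lambda>j. inverse (a j))"
proof -
  let ?B = "diag_mat (\<lambda>j. inverse (a j))"
  have P: "diag_mat a ** ?B = mat 1 \<and> ?B ** diag_mat a = mat 1"
    using assms by (simp add: diag_mul diag_one[symmetric])
  let ?C = "matrix_inv (diag_mat a)"
  have C: "diag_mat a ** ?C = mat 1 \<and> ?C ** diag_mat a = mat 1"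
    unfolding matrix_inv_def by (rule someI[of _ ?B]) (rule P)
  have "?C = ?C ** (diag_mat a ** ?B)" using P by simp
  also have "\<dots> = (?C ** diag_mat a) ** ?B" by (simp add: matrix_mul_assoc)
  also have "\<dots> = ?B" using C by simp
  finally show ?thesis .
qed

lemma if_conj_split_aux: "(\<Sum>j\<in>(UNIV::'a::finite set). if i = j \<and> P j then (x j::real) else 0) = (if P i then x i else 0)"
proof -
  have "(\<Sum>j\<in>UNIV. if i = j \<and> P j then (x j::real) else 0) = (\<Sum>j\<in>UNIV. if i = j then (if P j then x j else 0) else 0)"
    by (rule sum.cong) auto
  also have "\<dots> = (if P i then x i else 0)" by (subst sum.delta') auto
  finally show ?thesis .
qed

lemma G00_bound:
  fixes \<theta>s :: "real^'n::finite"
  assumes "\<forall>j. alpha j \<noteq> 0"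
  shows "spec_norm (sub00 (J0 \<theta>s) (Gmat q \<theta>s alpha xi))
           \<le> (\<Sum>j\<in>UNIV. if j \<in> J0 \<theta>s then \<bar>xi j powr (-1/q) / alpha j\<bar> else 0)"
proof -
  have G: "sub00 (J0 \<theta>s) (Gmat q \<theta>s alpha xi) =
     (\<chi> i j. if i = j \<and> j \<in> J0 \<theta>s then xi j powr (-1/q) / alpha j else 0)"
    unfolding sub00_def Gmat_def atil_def diag_inv[OF assms] diag_mul
    by (auto simp: vec_eq_iff diag_mat_def J0_def field_simps)
  show ?thesis
    unfolding spec_norm_def G
    apply (rule order_trans[OF onorm_le_matrix_component_sum[unfolded fun_eq_iff[symmetric]]])
    apply (simp add: if_distrib[where f=abs] cong: if_cong)
    apply (rule eq_refl, rule sum.cong, rule refl)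
    apply (simp add: if_conj_split_aux sum.delta)
    done
qed

lemma op_set_ne: "A \<subseteq> space M \<Longrightarrow> {measure M B | B. B \<in> sets M \<and> A \<subseteq> B} \<noteq> {}"
  by blast

lemma op_bdd: "bdd_below {measure M B | B. B \<in> sets M \<and> A \<subseteq> B}"
  by (rule bdd_belowI[of _ 0]) auto

lemma op_nonneg: "A \<subseteq> space M \<Longrightarrow> 0 \<le> outer_prob M A"
  unfolding outer_prob_def by (rule cInf_greatest[OF op_set_ne]) auto

lemma op_le: "B \<in> sets M \<Longrightarrow> A \<subseteq> B \<Longrightarrow> outer_prob M A \<le> measure M B"
  unfolding outer_prob_def by (rule cInf_lower[OF _ op_bdd]) auto

lemma op_mono: "A \<subseteq> B \<Longrightarrow> B \<subseteq> space M \<Longrightarrow> outer_prob M A \<le> outer_prob M B"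
  unfolding outer_prob_def[of M B]
  by (rule cInf_greatest[OF op_set_ne]) (auto intro: op_le)

lemma op_union:
  assumes P: "prob_space M" and A: "A \<subseteq> space M" and B: "B \<subseteq> space M"
  shows "outer_prob M (A \<union> B) \<le> outer_prob M A + outer_prob M B"
proof -
  interpret prob_space M by (rule P)
  have 1: "outer_prob M (A \<union> B) - measure M B' \<le> measure M A'"
    if "A' \<in> sets M" "A \<subseteq> A'" "B' \<in> sets M" "B \<subseteq> B'" for A' B'
  proof -
    have "outer_prob M (A \<union> B) \<le> measure M (A' \<union> B')"
      using that by (intro op_le) auto
    also have "\<dots> \<le> measure M A' + measure M B'"
      using that by (intro measure_Un_le) auto
    finally show ?thesis by simp
  qed
  have 2: "outer_prob M (A \<union> B) - measure M B' \<le> outer_prob M A"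
    if "B' \<in> sets M" "B \<subseteq> B'" for B'
    unfolding outer_prob_def[of M A]
    by (rule cInf_greatest[OF op_set_ne[OF A]]) (use 1 that in auto)
  have "outer_prob M (A \<union> B) - outer_prob M A \<le> outer_prob M B"
    unfolding outer_prob_def[of M B]
    by (rule cInf_greatest[OF op_set_ne[OF B]]) (use 2 in force)
  then show ?thesis by simp
qed

lemma op_UN:
  assumes P: "prob_space M" and "finite I" and "\<forall>i\<in>I. A i \<subseteq> space M"
  shows "outer_prob M (\<Union>i\<in>I. A i) \<le> (\<Sum>i\<in>I. outer_prob M (A i))"
  using assms(2,3)
proof (induction I rule: finite_induct)
  case empty
  then show ?case using op_le[of "{}" M "{}"] by simp
next
  case (insert x F)
  have "outer_prob M (\<Union>i\<in>insert x F. A i) = outer_prob M (A x \<union> (\<Union>i\<in>F. A i))" by simp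
  also have "\<dots> \<le> outer_prob M (A x) + outer_prob M (\<Union>i\<in>F. A i)"
    using insert by (intro op_union[OF P]) auto
  also have "\<dots> \<le> outer_prob M (A x) + (\<Sum>i\<in>F. outer_prob M (A i))"
    using insert by simp
  finally show ?case using insert by simp
qed

lemma op_null: "N \<in> null_sets M \<Longrightarrow> A \<subseteq> N \<Longrightarrow> outer_prob M A = 0"
  using op_le[of N M A] op_nonneg[of A M] sets.sets_into_space[of N M]
  by (auto simp: null_sets_def measure_def)

lemma ratio_bound:
  fixes a n L Mb q :: real
  assumes "a \<le> L * n" "0 < n" "n < 2 * Mb" "0 < q" "q \<le> 1" "0 \<le> L"
  shows "a / n powr q \<le> L * (2 * Mb) powr (1 - q)"
proof -
  have pq: "0 < n powr q" using assms by simp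
  have "a / n powr q \<le> L * n / n powr q" using assms pq by (simp add: divide_right_mono)
  also have "\<dots> = L * n powr (1 - q)" using assms by (simp add: powr_diff)
  also have "\<dots> \<le> L * (2 * Mb) powr (1 - q)"
    using assms by (intro mult_left_mono powr_mono2) auto
  finally show ?thesis .
qed

lemma value_bound:
  fixes r g \<delta> K0 \<epsilon> q :: real
  assumes "r \<le> K0" "0 \<le> K0" "0 \<le> g" "g \<le> \<delta>" "\<delta> = (\<epsilon> / (K0 + 1)) powr (1 / q)" "0 < \<epsilon>" "0 < q"
  shows "r * g powr q \<le> \<epsilon>"
proof -
  have "\<delta> powr q = \<epsilon> / (K0 + 1)" using assms by (simp add: powr_powr)
  then have gq: "g powr q \<le> \<epsilon> / (K0 + 1)" using assms by (metis powr_mono2 less_imp_le)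
  have "r * g powr q \<le> K0 * g powr q" using assms by (intro mult_right_mono) auto
  also have "\<dots> \<le> K0 * (\<epsilon> / (K0 + 1))" using gq assms by (intro mult_left_mono) auto
  also have "\<dots> \<le> \<epsilon>" using assms by (simp add: field_simps)
  finally show ?thesis .
qed



theorem proposition2:
  fixes \<Theta> :: "(real^'n::finite) set" and \<theta>s :: "real^'n"
    and M :: "'a measure" and TT :: "real set"
    and H :: "real \<Rightarrow> 'a \<Rightarrow> real^'n \<Rightarrow> real"
    and \<xi> :: "real \<Rightarrow> 'a \<Rightarrow> 'n \<Rightarrow> real"
    and \<alpha> :: "real \<Rightarrow> 'n \<Rightarrow> real"
    and q R :: real
    and D1 :: "real \<Rightarrow> 'a \<Rightarrow> real^'n \<Rightarrow> real^'n"
    and D2 :: "real \<Rightarrow> 'a \<Rightarrow> real^'n \<Rightarrow> real^'n^'n"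
    and D3 :: "real \<Rightarrow> 'a \<Rightarrow> real^'n \<Rightarrow> real^'n^'n^'n"
  assumes \<Theta>: "bounded \<Theta>" "open \<Theta>" "\<theta>s \<in> \<Theta>"
    and P: "prob_space M"
    and TT: "TT \<subseteq> {0..}" "\<forall>x. \<exists>t\<in>TT. x < t"
    and H_meas: "\<forall>T\<in>TT. \<forall>\<theta>\<in>closure \<Theta>. (\<lambda>\<omega>. H T \<omega> \<theta>) \<in> borel_measurable M"
    and H_cont: "\<forall>T\<in>TT. \<forall>\<omega>\<in>space M. continuous_on (closure \<Theta>) (H T \<omega>)"
    and \<xi>_meas: "\<forall>T\<in>TT. \<forall>j. (\<lambda>\<omega>. \<xi> T \<omega> j) \<in> borel_measurable M"
    and \<xi>_pos: "\<forall>T\<in>TT. \<forall>\<omega>\<in>space M. \<forall>j. \<xi> T \<omega> j > 0"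
    and \<alpha>_nz: "\<forall>T\<in>TT. \<forall>j. \<alpha> T j \<noteq> 0"
    and a_lim: "((\<lambda>T. spec_norm (diag_mat (\<alpha> T))) \<longlongrightarrow> 0) (along TT)"
    and q: "0 < q" "q \<le> 1"
    and A6: "\<forall>j\<in>J0 \<theta>s. tendsto0_prob M (along TT)
               (\<lambda>T \<omega>. ereal (\<xi> T \<omega> j powr (-1/q) / \<bar>\<alpha> T j\<bar>))"
    and R: "R > 0"
    and A7'_i: "\<forall>T\<in>TT. AE \<omega> in M. \<forall>\<theta>\<in>{\<theta>\<in>\<Theta>. norm (\<theta> - \<theta>s) < R}.
               (H T \<omega> has_derivative (\<lambda>h. D1 T \<omega> \<theta> \<bullet> h)) (at \<theta>) \<and>
               (D1 T \<omega> has_derivative (\<lambda>h. D2 T \<omega> \<theta> *v h)) (at \<theta>) \<and>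
               (D2 T \<omega> has_derivative (\<lambda>h. tensor3_app (D3 T \<omega> \<theta>) h)) (at \<theta>)"
    and A7'_ii: "bounded_prob M (along TT)
               (\<lambda>T \<omega>. ereal (norm (spec_norm (diag_mat (\<alpha> T)) *\<^sub>R D1 T \<omega> \<theta>s)))"
    and A7'_iii: "bounded_prob M (along TT)
               (\<lambda>T \<omega>. ereal ((spec_norm (diag_mat (\<alpha> T)))\<^sup>2) *
                  (SUP \<theta>\<in>{\<theta>\<in>\<Theta>. norm (\<theta> - \<theta>s) < R}. ereal (norm (D2 T \<omega> \<theta>))))"
    and A7'_iv: "bounded_prob M (along TT)
               (\<lambda>T \<omega>. ereal ((spec_norm (diag_mat (\<alpha> T)))\<^sup>2) *
                  (SUP \<theta>\<in>{\<theta>\<in>\<Theta>. norm (\<theta> - \<theta>s) < R}. ereal (norm (D3 T \<omega> \<theta>))))"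
  shows "\<forall>Mb>0. tendsto0_prob M (along TT)
           (\<lambda>T \<omega>. SUP (u, v) \<in> {(u, v). \<theta>s + diag_mat (\<alpha> T) *v u \<in> closure \<Theta>
                                    \<and> \<theta>s + diag_mat (\<alpha> T) *v v \<in> closure \<Theta>
                                    \<and> norm u < Mb \<and> norm v < Mb \<and> u \<noteq> v}.
              ereal (\<bar>H T \<omega> (\<theta>s + diag_mat (\<alpha> T) *v u) - H T \<omega> (\<theta>s + diag_mat (\<alpha> T) *v v)\<bar>
                     / norm (u - v) powr q
                     * spec_norm (sub00 (J0 \<theta>s) (Gmat q \<theta>s (\<alpha> T) (\<xi> T \<omega>))) powr q))"
  proof (intro allI impI)
  fix Mb :: real assume Mb: "Mb > 0"
  interpret prob_space M by (rule P)
  let ?F = "along TT"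
  define B where "B = {\<theta>\<in>\<Theta>. norm (\<theta> - \<theta>s) < R}"
  define s where "s T = spec_norm (diag_mat (\<alpha> T))" for T
  define Q where "Q T \<omega> \<longleftrightarrow> (\<forall>\<theta>\<in>B.
               (H T \<omega> has_derivative (\<lambda>h. D1 T \<omega> \<theta> \<bullet> h)) (at \<theta>) \<and>
               (D1 T \<omega> has_derivative (\<lambda>h. D2 T \<omega> \<theta> *v h)) (at \<theta>) \<and>
               (D2 T \<omega> has_derivative (\<lambda>h. tensor3_app (D3 T \<omega> \<theta>) h)) (at \<theta>))" for T \<omega>
  define K1 where "K1 T \<omega> = ereal (norm (spec_norm (diag_mat (\<alpha> T)) *\<^sub>R D1 T \<omega> \<theta>s))" for T \<omega>
  define K2 where "K2 T \<omega> = ereal ((spec_norm (diag_mat (\<alpha> T)))\<^sup>2) *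
                  (SUP \<theta>\<in>{\<theta>\<in>\<Theta>. norm (\<theta> - \<theta>s) < R}. ereal (norm (D2 T \<omega> \<theta>)))" for T \<omega>
  define rat where "rat j T \<omega> = \<xi> T \<omega> j powr (-1/q) / \<bar>\<alpha> T j\<bar>" for j T \<omega>
  define n where "n = real CARD('n)"
  have n1: "1 \<le> n" unfolding n_def by (simp add: Suc_leI)
  obtain r where r: "r > 0" "ball \<theta>s r \<subseteq> \<Theta>" using \<Theta> openE by blast
  define \<rho> where "\<rho> = min r R"
  have \<rho>: "\<rho> > 0" "ball \<theta>s \<rho> \<subseteq> B"
    using r R unfolding \<rho>_def B_def by (auto simp: dist_norm norm_minus_commute)
  show "tendsto0_prob M ?F (\<lambda>T \<omega>. SUP (u, v) \<in> {(u, v). \<theta>s + diag_mat (\<alpha> T) *v u \<in> closure \<Theta>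
                                    \<and> \<theta>s + diag_mat (\<alpha> T) *v v \<in> closure \<Theta>
                                    \<and> norm u < Mb \<and> norm v < Mb \<and> u \<noteq> v}.
              ereal (\<bar>H T \<omega> (\<theta>s + diag_mat (\<alpha> T) *v u) - H T \<omega> (\<theta>s + diag_mat (\<alpha> T) *v v)\<bar>
                     / norm (u - v) powr q
                     * spec_norm (sub00 (J0 \<theta>s) (Gmat q \<theta>s (\<alpha> T) (\<xi> T \<omega>))) powr q))"
    (is "tendsto0_prob M ?F ?X")
    unfolding tendsto0_prob_def
  proof (intro allI impI)
    fix \<epsilon> :: real assume \<epsilon>: "\<epsilon> > 0"
    define E where "E T = {\<omega> \<in> space M. ereal \<epsilon> < ?X T \<omega>}" for T
    show "((\<lambda>T. outer_prob M {\<omega> \<in> space M. ereal \<epsilon> < ?X T \<omega>}) \<longlongrightarrow> 0) ?F"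
    proof (rule tendstoI)
      fix \<eta> :: real assume \<eta>: "\<eta> > 0"
      have ev0: "eventually (\<lambda>T. T \<in> TT) ?F"
        unfolding along_def eventually_inf_principal by simp
      have ev1: "eventually (\<lambda>T. s T < \<rho> / Mb) ?F"
        using order_tendstoD(2)[OF a_lim] \<rho> Mb unfolding s_def by simp
      obtain C1 where C1: "eventually (\<lambda>T. outer_prob M {\<omega> \<in> space M. ereal C1 < K1 T \<omega>} < \<eta>/4) ?F"
        using A7'_ii \<eta> unfolding bounded_prob_def K1_def by (meson zero_less_divide_iff zero_less_numeral)
      obtain C2 where C2: "eventually (\<lambda>T. outer_prob M {\<omega> \<in> space M. ereal C2 < K2 T \<omega>} < \<eta>/4) ?F"
        using A7'_iii \<eta> unfolding bounded_prob_def K2_def by (meson zero_less_divide_iff zero_less_numeral)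
      define C1' where "C1' = max C1 0"
      define C2' where "C2' = max C2 0"
      define L where "L = C1' + n * n * C2' * Mb"
      define K0 where "K0 = L * (2 * Mb) powr (1 - q)"
      have L0: "0 \<le> L" unfolding L_def C1'_def C2'_def using n1 Mb by simp
      have K00: "0 \<le> K0" unfolding K0_def using L0 by simp
      define \<delta> where "\<delta> = (\<epsilon> / (K0 + 1)) powr (1 / q)"
      have \<delta>0: "\<delta> > 0" unfolding \<delta>_def using \<epsilon> K00 by simp
      define \<delta>' where "\<delta>' = \<delta> / n"
      have \<delta>'0: "\<delta>' > 0" unfolding \<delta>'_def using \<delta>0 n1 by simp
      have ev3: "eventually (\<lambda>T. \<forall>j\<in>J0 \<theta>s. outer_prob M {\<omega> \<in> space M. ereal \<delta>' < ereal (rat j T \<omega>)} < \<eta> / (4 * n)) ?F"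
      proof (rule eventually_ball_finite)
        show "finite (J0 \<theta>s)" by simp
        show "\<forall>j\<in>J0 \<theta>s. eventually (\<lambda>T. outer_prob M {\<omega> \<in> space M. ereal \<delta>' < ereal (rat j T \<omega>)} < \<eta> / (4 * n)) ?F"
        proof
          fix j assume j: "j \<in> J0 \<theta>s"
          have "((\<lambda>T. outer_prob M {\<omega> \<in> space M. ereal \<delta>' < ereal (rat j T \<omega>)}) \<longlongrightarrow> 0) ?F"
            using A6 j \<delta>'0 unfolding tendsto0_prob_def rat_def by blast
          then show "eventually (\<lambda>T. outer_prob M {\<omega> \<in> space M. ereal \<delta>' < ereal (rat j T \<omega>)} < \<eta> / (4 * n)) ?F"
            using \<eta> n1 by (intro order_tendstoD(2)) auto
        qed
      qed
      show "eventually (\<lambda>T. dist (outer_prob M {\<omega> \<in> space M. ereal \<epsilon> < ?X T \<omega>}) 0 < \<eta>) ?F"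
        using ev0 ev1 C1 C2 ev3
      proof eventually_elim
        case (elim T)
        have TT': "T \<in> TT" using elim by blast
        define bad0 where "bad0 = {\<omega> \<in> space M. \<not> Q T \<omega>}"
        have op0: "outer_prob M bad0 = 0"
        proof -
          have "AE \<omega> in M. Q T \<omega>" using A7'_i TT' unfolding Q_def B_def by blast
          then obtain N where "{\<omega> \<in> space M. \<not> Q T \<omega>} \<subseteq> N" "emeasure M N = 0" "N \<in> sets M"
            by (rule AE_E)
          then show ?thesis unfolding bad0_def by (intro op_null[of N]) auto
        qed
        define E1 where "E1 = {\<omega> \<in> space M. ereal C1 < K1 T \<omega>}"
        define E2 where "E2 = {\<omega> \<in> space M. ereal C2 < K2 T \<omega>}"
        define E3 where "E3 j = {\<omega> \<in> space M. ereal \<delta>' < ereal (rat j T \<omega>)}" for j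
        have sub: "{\<omega> \<in> space M. ereal \<epsilon> < ?X T \<omega>} \<subseteq> ((bad0 \<union> E1) \<union> E2) \<union> (\<Union>j\<in>J0 \<theta>s. E3 j)"
        proof
          fix \<omega> assume \<omega>: "\<omega> \<in> {\<omega> \<in> space M. ereal \<epsilon> < ?X T \<omega>}"
          show "\<omega> \<in> ((bad0 \<union> E1) \<union> E2) \<union> (\<Union>j\<in>J0 \<theta>s. E3 j)"
          proof (rule ccontr)
            assume "\<omega> \<notin> ((bad0 \<union> E1) \<union> E2) \<union> (\<Union>j\<in>J0 \<theta>s. E3 j)"
            then have \<omega>s: "\<omega> \<in> space M" and q\<omega>: "Q T \<omega>" and k1: "K1 T \<omega> \<le> ereal C1"
              and k2: "K2 T \<omega> \<le> ereal C2" and k3: "\<forall>j\<in>J0 \<theta>s. rat j T \<omega> \<le> \<delta>'"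
              using \<omega> unfolding bad0_def E1_def E2_def E3_def by (auto simp: not_less)
            have s0: "0 \<le> s T" unfolding s_def by (rule spec_norm_bound(2))
            have c1: "s T * norm (D1 T \<omega> \<theta>s) \<le> C1'"
              using k1 s0 unfolding K1_def s_def C1'_def by simp
            have c2: "\<forall>\<theta>\<in>ball \<theta>s \<rho>. (s T)\<^sup>2 * norm (D2 T \<omega> \<theta>) \<le> C2'"
            proof
              fix \<theta> assume "\<theta> \<in> ball \<theta>s \<rho>"
              then have \<theta>B: "\<theta> \<in> {\<theta>\<in>\<Theta>. norm (\<theta> - \<theta>s) < R}" using \<rho> unfolding B_def by blast
              have "ereal ((s T)\<^sup>2 * norm (D2 T \<omega> \<theta>)) = ereal ((s T)\<^sup>2) * ereal (norm (D2 T \<omega> \<theta>))" by simp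
              also have "\<dots> \<le> K2 T \<omega>" unfolding K2_def s_def
                by (intro ereal_mult_left_mono SUP_upper \<theta>B) auto
              also have "\<dots> \<le> ereal C2" by (rule k2)
              finally show "(s T)\<^sup>2 * norm (D2 T \<omega> \<theta>) \<le> C2'" unfolding C2'_def by simp
            qed
            have der: "\<forall>\<theta>\<in>ball \<theta>s \<rho>. (H T \<omega> has_derivative (\<lambda>h. D1 T \<omega> \<theta> \<bullet> h)) (at \<theta>) \<and>
                 (D1 T \<omega> has_derivative (\<lambda>h. D2 T \<omega> \<theta> *v h)) (at \<theta>)"
              using q\<omega> \<rho> unfolding Q_def by blast
            have sr: "s T * Mb < \<rho>" using elim Mb by (simp add: field_simps)
            define g where "g = spec_norm (sub00 (J0 \<theta>s) (Gmat q \<theta>s (\<alpha> T) (\<xi> T \<omega>)))"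
            have g0: "0 \<le> g" unfolding g_def by (rule spec_norm_bound(2))
            have g\<delta>: "g \<le> \<delta>"
            proof -
              have "g \<le> (\<Sum>j\<in>UNIV. if j \<in> J0 \<theta>s then \<bar>\<xi> T \<omega> j powr (-1/q) / \<alpha> T j\<bar> else 0)"
                unfolding g_def by (rule G00_bound) (use \<alpha>_nz TT' in blast)
              also have "\<dots> \<le> (\<Sum>j\<in>(UNIV::'n set). \<delta>')"
              proof (rule sum_mono)
                fix j :: 'n
                show "(if j \<in> J0 \<theta>s then \<bar>\<xi> T \<omega> j powr (-1/q) / \<alpha> T j\<bar> else 0) \<le> \<delta>'"
                  using k3 \<delta>'0 unfolding rat_def by (auto simp: abs_divide)
              qed
              also have "\<dots> = \<delta>" unfolding \<delta>'_def n_def by simp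
              finally show ?thesis .
            qed
            have "?X T \<omega> \<le> ereal \<epsilon>"
            proof (rule SUP_least)
              fix x assume x: "x \<in> {(u, v). \<theta>s + diag_mat (\<alpha> T) *v u \<in> closure \<Theta>
                                    \<and> \<theta>s + diag_mat (\<alpha> T) *v v \<in> closure \<Theta>
                                    \<and> norm u < Mb \<and> norm v < Mb \<and> u \<noteq> v}"
              then obtain u v where x': "x = (u, v)" and uv: "norm u < Mb" "norm v < Mb" "u \<noteq> v" by blast
              have d: "\<bar>H T \<omega> (\<theta>s + diag_mat (\<alpha> T) *v u) - H T \<omega> (\<theta>s + diag_mat (\<alpha> T) *v v)\<bar>
                  \<le> (C1' + real CARD('n) * real CARD('n) * C2' * Mb) * norm (u - v)"
                by (rule key_diff[OF der sr[unfolded s_def] c1[unfolded s_def] c2[unfolded s_def]])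
                   (use uv in \<open>auto simp: C1'_def C2'_def\<close>)
              have nuv: "0 < norm (u - v)" "norm (u - v) < 2 * Mb"
                using uv norm_triangle_ineq4[of u v] by auto
              have rb: "\<bar>H T \<omega> (\<theta>s + diag_mat (\<alpha> T) *v u) - H T \<omega> (\<theta>s + diag_mat (\<alpha> T) *v v)\<bar>
                   / norm (u - v) powr q \<le> K0"
                unfolding K0_def using d nuv q L0 unfolding L_def n_def
                by (intro ratio_bound) auto
              have "\<bar>H T \<omega> (\<theta>s + diag_mat (\<alpha> T) *v u) - H T \<omega> (\<theta>s + diag_mat (\<alpha> T) *v v)\<bar>
                   / norm (u - v) powr q * g powr q \<le> \<epsilon>"
                by (rule value_bound[OF rb K00 g0 g\<delta> \<delta>_def \<epsilon> q(1)])
              then show "(\<lambda>(u, v). ereal (\<bar>H T \<omega> (\<theta>s + diag_mat (\<alpha> T) *v u) - H T \<omega> (\<theta>s + diag_mat (\<alpha> T) *v v)\<bar>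
                     / norm (u - v) powr q
                     * spec_norm (sub00 (J0 \<theta>s) (Gmat q \<theta>s (\<alpha> T) (\<xi> T \<omega>))) powr q)) x \<le> ereal \<epsilon>"
                unfolding x' g_def by simp
            qed
            then show False using \<omega> by (simp only: mem_Collect_eq not_less[symmetric]) blast
          qed
        qed
        have sp: "bad0 \<subseteq> space M" "E1 \<subseteq> space M" "E2 \<subseteq> space M" "\<forall>j\<in>J0 \<theta>s. E3 j \<subseteq> space M"
          unfolding bad0_def E1_def E2_def E3_def by auto
        have "outer_prob M {\<omega> \<in> space M. ereal \<epsilon> < ?X T \<omega>}
              \<le> outer_prob M (((bad0 \<union> E1) \<union> E2) \<union> (\<Union>j\<in>J0 \<theta>s. E3 j))"
          using sub sp by (intro op_mono) auto
        also have "\<dots> \<le> outer_prob M ((bad0 \<union> E1) \<union> E2) + outer_prob M (\<Union>j\<in>J0 \<theta>s. E3 j)"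
          using sp by (intro op_union[OF P]) auto
        also have "\<dots> \<le> (outer_prob M bad0 + outer_prob M E1 + outer_prob M E2) + (\<Sum>j\<in>J0 \<theta>s. outer_prob M (E3 j))"
          using sp op_union[OF P, of bad0 E1] op_union[OF P, of "bad0 \<union> E1" E2] op_UN[OF P, of "J0 \<theta>s" E3]
          by (intro add_mono) auto
        also have "\<dots> < \<eta>"
        proof -
          have "(\<Sum>j\<in>J0 \<theta>s. outer_prob M (E3 j)) \<le> (\<Sum>j\<in>J0 \<theta>s. \<eta> / (4 * n))"
            using elim unfolding E3_def by (intro sum_mono) (auto intro: less_imp_le)
          also have "\<dots> = real (card (J0 \<theta>s)) * (\<eta> / (4 * n))" by simp
          also have "\<dots> \<le> n * (\<eta> / (4 * n))"
            unfolding n_def using \<eta> by (intro mult_right_mono) (auto simp: card_mono)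
          also have "\<dots> = \<eta> / 4" using n1 by simp
          finally have "(\<Sum>j\<in>J0 \<theta>s. outer_prob M (E3 j)) \<le> \<eta> / 4" .
          moreover have "outer_prob M E1 < \<eta>/4" "outer_prob M E2 < \<eta>/4"
            using elim unfolding E1_def E2_def by auto
          ultimately show ?thesis using op0 \<eta> by simp
        qed
        finally have "outer_prob M {\<omega> \<in> space M. ereal \<epsilon> < ?X T \<omega>} < \<eta>" .
        moreover have "0 \<le> outer_prob M {\<omega> \<in> space M. ereal \<epsilon> < ?X T \<omega>}"
          by (rule op_nonneg) auto
        ultimately show ?case by (simp add: dist_real_def)
      qed
    qed
  qed
qed

end
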